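(* Let $n\in\mathbb{N}$, $a<b$, and let $f:[a,b]\to\mathbb{R}$ be $(2n-1)$-convex. If $x_1,\dots,x_n\in(a,b)$, then there exists a polynomial $p\in\Pi_{2n-1}$ such that $p(x_i)=f(x_i)$ for $i=1,\dots,n$ and $p(x)\le f(x)$ for all $x\in[a,b]$.
   Context: $\Pi_m$ denotes the set of real polynomials of degree at most $m$. Divided differences are defined recursively by $[x_1;f]:=f(x_1)$ and $[x_1,\dots,x_{m+1};f]:=\frac{[x_2,\dots,x_{m+1};f]-[x_1,\dots,x_m;f]}{x_{m+1}-x_1}$ for pairwise distinct points. For $m\in\mathbb{N}$, a function $f$ on an interval $I$ is called $m$-convex if $[x_1,\dots,x_{m+2};f]\ge 0$ for all pairwise distinct $x_1,\dots,x_{m+2}\in I$. *)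

theory Defs
  imports Complex_Main "HOL-Computational_Algebra.Polynomial"
begin

fun divdiff :: "real list \<Rightarrow> (real \<Rightarrow> real) \<Rightarrow> real" where
  "divdiff [] f = 0"
| "divdiff [x] f = f x"
| "divdiff (x # y # ys) f =
     (divdiff (y # ys) f - divdiff (butlast (x # y # ys)) f) / (last (y # ys) - x)"

definition m_convex :: "nat \<Rightarrow> real set \<Rightarrow> (real \<Rightarrow> real) \<Rightarrow> bool" where
  "m_convex m I f \<longleftrightarrow>
     (\<forall>xs. length xs = m + 2 \<longrightarrow> distinct xs \<longrightarrow> set xs \<subseteq> I \<longrightarrow> divdiff xs f \<ge> 0)"

end

theory Submission imports Defs "HOL-Analysis.Analysis" begin

definition ddS :: "real set \<Rightarrow> (real \<Rightarrow> real) \<Rightarrow> real" where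
  "ddS S f = (\<Sum>u\<in>S. f u / (\<Prod>v\<in>S-{u}. (u - v)))"

lemma prod_diff_nz: "finite A \<Longrightarrow> u \<notin> A \<Longrightarrow> (\<Prod>v\<in>A. (u::real) - v) \<noteq> 0"
  by (auto simp: prod_zero_iff)

lemma ddS_remove: assumes "finite S" "x \<in> S"
  shows "ddS (S-{x}) f = (\<Sum>u\<in>S. if u = x then 0 else f u / (\<Prod>v\<in>S-{x,u}. (u - v)))"
proof -
  have "(\<Sum>u\<in>S. if u = x then 0 else f u / (\<Prod>v\<in>S-{x,u}. (u - v)))
      = (\<Sum>u\<in>S-{x}. if u = x then 0 else f u / (\<Prod>v\<in>S-{x,u}. (u - v)))"
    using assms by (subst sum.remove[of _ x]) auto
  also have "\<dots> = ddS (S-{x}) f" unfolding ddS_def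
  proof (rule sum.cong)
    fix u assume "u \<in> S - {x}"
    moreover have "S - {x} - {u} = S - {x,u}" by auto
    ultimately show "(if u = x then 0 else f u / (\<Prod>v\<in>S-{x,u}. (u - v))) = f u / (\<Prod>v\<in>S-{x}-{u}. (u - v))"
      by simp
  qed simp
  finally show ?thesis by simp
qed

lemma ddS_rec: assumes S: "finite S" "x \<in> S" "l \<in> S" "x \<noteq> l"
  shows "(l - x) * ddS S f = ddS (S-{x}) f - ddS (S-{l}) f"
proof -
  have pt: "(l - x) * (f u / (\<Prod>v\<in>S-{u}. (u - v))) =
     (if u = x then 0 else f u / (\<Prod>v\<in>S-{x,u}. (u - v))) -
     (if u = l then 0 else f u / (\<Prod>v\<in>S-{l,u}. (u - v)))" if u: "u \<in> S" for u
  proof -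
    consider "u = x" | "u = l" | "u \<noteq> x" "u \<noteq> l" by blast
    then show ?thesis
    proof cases
      case 1
      have e: "(\<Prod>v\<in>S-{u}. (u - v)) = (u - l) * (\<Prod>v\<in>S-{x,l}. (u - v))"
        using S 1 by (subst prod.remove[of _ l]) (auto intro!: prod.cong)
      have nz: "(\<Prod>v\<in>S-{x,l}. (u - v)) \<noteq> 0" using S 1 by (intro prod_diff_nz) auto
      have e2: "S - {l,u} = S - {x,l}" using 1 by auto
      show ?thesis using 1 S nz unfolding e e2 by (simp add: field_simps)
    next
      case 2
      have e: "(\<Prod>v\<in>S-{u}. (u - v)) = (u - x) * (\<Prod>v\<in>S-{x,l}. (u - v))"
        using S 2 by (subst prod.remove[of _ x]) (auto intro!: prod.cong)
      have nz: "(\<Prod>v\<in>S-{x,l}. (u - v)) \<noteq> 0" using S 2 by (intro prod_diff_nz) auto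
      have e2: "S - {x,u} = S - {x,l}" using 2 by auto
      show ?thesis using 2 S nz unfolding e e2 by (simp add: field_simps)
    next
      case 3
      define P where "P = (\<Prod>v\<in>S-{u,x,l}. (u - v))"
      have nz: "P \<noteq> 0" unfolding P_def using S by (intro prod_diff_nz) auto
      have e1: "(\<Prod>v\<in>S-{u}. (u - v)) = (u - x) * ((u - l) * P)"
        unfolding P_def using S 3
        by (subst prod.remove[of _ x], simp, simp, subst prod.remove[of _ l]) (auto intro!: prod.cong)
      have e2: "(\<Prod>v\<in>S-{x,u}. (u - v)) = (u - l) * P"
        unfolding P_def using S 3
        by (subst prod.remove[of _ l]) (auto intro!: prod.cong)
      have e3: "(\<Prod>v\<in>S-{l,u}. (u - v)) = (u - x) * P"
        unfolding P_def using S 3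
        by (subst prod.remove[of _ x]) (auto intro!: prod.cong)
      have A: "u - x \<noteq> 0" "u - l \<noteq> 0" using 3 by auto
      have lx: "l - x = (u - x) - (u - l)" by simp
      have gen: "\<And>A B. A \<noteq> 0 \<Longrightarrow> B \<noteq> 0 \<Longrightarrow> (A - B) * (c / (A * (B * P))) = c / (B * P) - c / (A * P)" for c
        using nz by (simp add: field_simps)
      show ?thesis using 3 unfolding e1 e2 e3 lx using gen[OF A] by simp
    qed
  qed
  have "(l - x) * ddS S f = (\<Sum>u\<in>S. (l - x) * (f u / (\<Prod>v\<in>S-{u}. (u - v))))"
    unfolding ddS_def by (simp add: sum_distrib_left)
  also have "\<dots> = (\<Sum>u\<in>S. (if u = x then 0 else f u / (\<Prod>v\<in>S-{x,u}. (u - v))) -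
     (if u = l then 0 else f u / (\<Prod>v\<in>S-{l,u}. (u - v))))"
    by (rule sum.cong[OF refl], erule pt)
  also have "\<dots> = ddS (S-{x}) f - ddS (S-{l}) f"
    unfolding ddS_remove[OF S(1,2)] ddS_remove[OF S(1,3)] by (simp only: sum_subtractf)
  finally show ?thesis .
qed

lemma set_butlast_distinct: "distinct xs \<Longrightarrow> xs \<noteq> [] \<Longrightarrow> set (butlast xs) = set xs - {last xs}"
proof -
  assume d: "distinct xs" and ne: "xs \<noteq> []"
  have e: "xs = butlast xs @ [last xs]" using ne by simp
  have "distinct (butlast xs @ [last xs])" using d e by metis
  then have "last xs \<notin> set (butlast xs)" by simp
  then show ?thesis by (subst (2) e) auto
qed

lemma divdiff_ddS: "distinct xs \<Longrightarrow> divdiff xs f = ddS (set xs) f"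
proof (induction xs f rule: divdiff.induct)
  case (1 f) then show ?case by (simp add: ddS_def)
next
  case (2 x f) then show ?case by (simp add: ddS_def)
next
  case (3 x y ys f)
  define l where "l = last (y # ys)"
  have d: "distinct (x#y#ys)" by fact
  have l: "l \<in> set (y#ys)" unfolding l_def by simp
  have xl: "x \<noteq> l" using d l by auto
  have b: "set (butlast (x#y#ys)) = set (x#y#ys) - {l}"
    using set_butlast_distinct[OF d] unfolding l_def by simp
  have s: "set (y#ys) = set (x#y#ys) - {x}" using d by auto
  have d1: "distinct (y#ys)" using d by simp
  have d2: "distinct (butlast (x#y#ys))" using d by (rule distinct_butlast)
  have IH1: "divdiff (y#ys) f = ddS (set (y#ys)) f" using "3.IH" d1 by blast
  have IH2: "divdiff (butlast (x#y#ys)) f = ddS (set (butlast (x#y#ys))) f"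
    using "3.IH" d2 by blast
  have r: "(l - x) * ddS (set (x#y#ys)) f = ddS (set (x#y#ys) - {x}) f - ddS (set (x#y#ys) - {l}) f"
    by (rule ddS_rec) (use l xl in auto)
  have "l - x \<noteq> 0" using xl by simp
  then show ?case using r
    by (simp only: divdiff.simps IH1 IH2 b s flip: l_def) (simp add: field_simps)
qed

lemma m_convex_ddS: assumes "m_convex m I f" "finite S" "S \<subseteq> I" "card S = m + 2"
  shows "ddS S f \<ge> 0"
proof -
  define xs where "xs = sorted_list_of_set S"
  have "distinct xs" "set xs = S" "length xs = card S" using assms unfolding xs_def by auto
  then have "divdiff xs f \<ge> 0" using assms(1,3,4) unfolding m_convex_def by auto
  then show ?thesis using divdiff_ddS[OF \<open>distinct xs\<close>] \<open>set xs = S\<close> by simp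
qed


definition lagr :: "real set \<Rightarrow> (real \<Rightarrow> real) \<Rightarrow> real poly" where
 "lagr N g = (\<Sum>u\<in>N. smult (g u / (\<Prod>v\<in>N-{u}. (u - v))) (\<Prod>v\<in>N-{u}. [:-v, 1:]))"

lemma poly_lagr: "poly (lagr N g) t = (\<Sum>u\<in>N. g u * ((\<Prod>v\<in>N-{u}. (t - v)) / (\<Prod>v\<in>N-{u}. (u - v))))"
  unfolding lagr_def poly_sum
proof (rule sum.cong[OF refl])
  fix u
  have "poly (\<Prod>v\<in>N-{u}. [:-v, 1:]) t = (\<Prod>v\<in>N-{u}. (t - v))"
    by (simp add: poly_prod)
  then show "poly (smult (g u / (\<Prod>v\<in>N-{u}. (u - v))) (\<Prod>v\<in>N-{u}. [:-v, 1:])) t =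
    g u * ((\<Prod>v\<in>N-{u}. (t - v)) / (\<Prod>v\<in>N-{u}. (u - v)))" by simp
qed

lemma degree_lagr: assumes "finite N" shows "degree (lagr N g) \<le> card N - 1"
  unfolding lagr_def
proof (rule degree_sum_le[OF assms])
  fix u assume u: "u \<in> N"
  have "degree (\<Prod>v\<in>N-{u}. [:-v, 1:]) \<le> (\<Sum>v\<in>N-{u}. degree [:-v, 1:])"
    using degree_prod_sum_le[of "N-{u}" "\<lambda>v. [:-v, 1:]"] assms by (simp add: o_def)
  also have "\<dots> = card N - 1" using assms u by simp
  finally show "degree (smult (g u / (\<Prod>v\<in>N-{u}. (u - v))) (\<Prod>v\<in>N-{u}. [:-v, 1:])) \<le> card N - 1"
    by (meson degree_smult_le order_trans)
qed

lemma lagr_node: assumes "finite N" "w \<in> N" shows "poly (lagr N g) w = g w"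
proof -
  have z: "g u * ((\<Prod>v\<in>N-{u}. (w - v)) / (\<Prod>v\<in>N-{u}. (u - v))) = 0" if "u \<in> N - {w}" for u
  proof -
    have "(\<Prod>v\<in>N-{u}. (w - v)) = 0" using that assms by (auto simp: prod_zero_iff)
    then show ?thesis by simp
  qed
  have nz: "(\<Prod>v\<in>N-{w}. (w - v)) \<noteq> 0" using assms by (intro prod_diff_nz) auto
  have s0: "(\<Sum>u\<in>N-{w}. g u * ((\<Prod>v\<in>N-{u}. (w - v)) / (\<Prod>v\<in>N-{u}. (u - v)))) = 0"
    by (rule sum.neutral) (use z in blast)
  have "poly (lagr N g) w = g w * ((\<Prod>v\<in>N-{w}. (w - v)) / (\<Prod>v\<in>N-{w}. (w - v)))
      + (\<Sum>u\<in>N-{w}. g u * ((\<Prod>v\<in>N-{u}. (w - v)) / (\<Prod>v\<in>N-{u}. (u - v))))"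
    unfolding poly_lagr by (rule sum.remove[OF assms])
  also have "\<dots> = g w" unfolding s0 using nz by simp
  finally show ?thesis .
qed

lemma lagr_err: assumes N: "finite N" and t: "t \<notin> N"
  shows "f t - poly (lagr N f) t = ddS (insert t N) f * (\<Prod>v\<in>N. t - v)"
proof -
  define W where "W = (\<Prod>v\<in>N. t - v)"
  have Wnz: "W \<noteq> 0" unfolding W_def using N t by (intro prod_diff_nz) auto
  have pt: "f u / (\<Prod>v\<in>insert t N-{u}. (u - v)) * W = - (f u * ((\<Prod>v\<in>N-{u}. (t - v)) / (\<Prod>v\<in>N-{u}. (u - v))))"
    if u: "u \<in> N" for u
  proof -
    have ut: "u \<noteq> t" using u t by auto
    have e1: "(\<Prod>v\<in>insert t N-{u}. (u - v)) = (u - t) * (\<Prod>v\<in>N-{u}. (u - v))"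
    proof -
      have "insert t N - {u} = insert t (N - {u})" using ut by auto
      then show ?thesis using N t by simp
    qed
    have e2: "W = (t - u) * (\<Prod>v\<in>N-{u}. (t - v))" unfolding W_def using N u by (simp add: prod.remove)
    have nz: "(\<Prod>v\<in>N-{u}. (u - v)) \<noteq> 0" using N by (intro prod_diff_nz) auto
    have "u - t \<noteq> 0" using ut by simp
    then show ?thesis unfolding e1 e2 using nz by (simp add: field_simps)
  qed
  have "ddS (insert t N) f = f t / W + (\<Sum>u\<in>N. f u / (\<Prod>v\<in>insert t N-{u}. (u - v)))"
  proof -
    have "insert t N - {t} = N" using t by auto
    then show ?thesis unfolding ddS_def W_def using N t by (simp add: sum.insert)
  qed
  then have "ddS (insert t N) f * W = f t + (\<Sum>u\<in>N. f u / (\<Prod>v\<in>insert t N-{u}. (u - v)) * W)"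
    using Wnz by (simp add: distrib_right sum_distrib_right)
  also have "\<dots> = f t + (\<Sum>u\<in>N. - (f u * ((\<Prod>v\<in>N-{u}. (t - v)) / (\<Prod>v\<in>N-{u}. (u - v)))))"
    by (rule arg_cong[where f="\<lambda>s. f t + s"], rule sum.cong[OF refl], erule pt)
  also have "\<dots> = f t - poly (lagr N f) t"
    unfolding poly_lagr by (simp only: sum_negf)
  finally show ?thesis unfolding W_def by simp
qed

lemma lagr_unique: assumes "finite N" "degree p < card N"
  shows "lagr N (poly p) = p"
proof (rule poly_eqI_degree[of N])
  show "\<And>x. x \<in> N \<Longrightarrow> poly (lagr N (poly p)) x = poly p x" using assms lagr_node by blast
  show "degree (lagr N (poly p)) < card N" using degree_lagr[OF assms(1), of "poly p"] assms(2) by linarith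
qed (use assms in auto)



lemma delta_exists: assumes "finite Y" "finite T" "\<forall>y\<in>Y. y < (b::real)"
  shows "\<exists>d>0. \<forall>y\<in>Y. \<forall>t\<in>insert b (T \<union> Y). y < t \<longrightarrow> d < t - y"
proof -
  define D where "D = {t - y | t y. t \<in> insert b (T \<union> Y) \<and> y \<in> Y \<and> y < t}"
  have "D \<subseteq> (\<lambda>(t,y). t - y) ` (insert b (T \<union> Y) \<times> Y)" unfolding D_def by auto
  then have fD: "finite D" using assms by (meson finite_SigmaI finite_Un finite_imageI finite_insert finite_subset)
  have pD: "\<forall>e\<in>D. 0 < e" unfolding D_def by auto
  show ?thesis
  proof (cases "D = {}")
    case True
    then show ?thesis unfolding D_def by (intro exI[of _ 1]) auto
  next
    case False
    have "0 < Min D" using fD False pD by simp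
    moreover have "\<forall>y\<in>Y. \<forall>t\<in>insert b (T \<union> Y). y < t \<longrightarrow> Min D / 2 < t - y"
    proof (intro ballI impI)
      fix y t assume "y \<in> Y" "t \<in> insert b (T \<union> Y)" "y < t"
      then have "t - y \<in> D" unfolding D_def by blast
      then have "Min D \<le> t - y" using fD by simp
      then show "Min D / 2 < t - y" using \<open>t - y \<in> D\<close> pD by fastforce
    qed
    ultimately show ?thesis by (intro exI[of _ "Min D / 2"]) auto
  qed
qed

locale pairing =
  fixes Y :: "real set" and d :: real
  assumes fin: "finite Y" and dpos: "0 < d" and gap: "\<forall>y\<in>Y. \<forall>y'\<in>Y. y < y' \<longrightarrow> d < y' - y"
begin

definition "Z = (\<lambda>y. y + d) ` Y"

lemma Z_disj: "Y \<inter> Z = {}"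
proof -
  have "y + d \<notin> Y" if y: "y \<in> Y" for y
  proof
    assume "y + d \<in> Y"
    moreover have "y < y + d" using dpos by simp
    ultimately have "d < (y + d) - y" using gap y by blast
    then show False by simp
  qed
  then show ?thesis unfolding Z_def by auto
qed

lemma Z_fin: "finite Z" unfolding Z_def using fin by simp

lemma inj_d: "inj_on (\<lambda>y. y + d) A" by (auto simp: inj_on_def)

lemma Z_card: "card Z = card Y" unfolding Z_def by (rule card_image[OF inj_d])

lemma pair_prod: "(\<Prod>u\<in>Y \<union> Z. h u) = (\<Prod>y\<in>Y. h y * h (y + d))"
proof -
  have "(\<Prod>u\<in>Y \<union> Z. h u) = (\<Prod>u\<in>Y. h u) * (\<Prod>u\<in>Z. h u)"
    using Z_disj fin Z_fin by (simp add: prod.union_disjoint)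
  also have "(\<Prod>u\<in>Z. h u) = (\<Prod>y\<in>Y. h (y + d))" unfolding Z_def
    using prod.reindex[OF inj_d, of h Y] by (simp add: o_def)
  finally show ?thesis by (simp add: prod.distrib)
qed

lemma pair_pos: assumes "z \<in> Z" shows "0 < (\<Prod>u\<in>(Y \<union> Z) - {z}. z - u)"
proof -
  obtain y0 where y0: "y0 \<in> Y" "z = y0 + d" using assms unfolding Z_def by auto
  have zY: "z \<notin> Y" using assms Z_disj by auto
  have e: "(Y \<union> Z) - {z} = Y \<union> (\<lambda>y. y + d) ` (Y - {y0})" using y0 zY unfolding Z_def by auto
  have dj: "Y \<inter> (\<lambda>y. y + d) ` (Y - {y0}) = {}" using Z_disj unfolding Z_def by auto
  have "(\<Prod>u\<in>(Y \<union> Z) - {z}. z - u) = (\<Prod>u\<in>Y. z - u) * (\<Prod>u\<in>(\<lambda>y. y + d) ` (Y - {y0}). z - u)"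
    unfolding e using dj fin by (simp add: prod.union_disjoint)
  also have "(\<Prod>u\<in>(\<lambda>y. y + d) ` (Y - {y0}). z - u) = (\<Prod>y\<in>Y - {y0}. z - (y + d))"
    using prod.reindex[OF inj_d, of "\<lambda>u. z - u" "Y - {y0}"] by (simp add: o_def)
  also have "(\<Prod>u\<in>Y. z - u) = (z - y0) * (\<Prod>u\<in>Y - {y0}. z - u)"
    using fin y0 by (simp add: prod.remove)
  finally have eq: "(\<Prod>u\<in>(Y \<union> Z) - {z}. z - u) = d * (\<Prod>y\<in>Y - {y0}. (z - y) * (z - (y + d)))"
    using y0 by (simp add: prod.distrib)
  have "0 < (\<Prod>y\<in>Y - {y0}. (z - y) * (z - (y + d)))"
  proof (rule prod_pos)
    fix y assume y: "y \<in> Y - {y0}"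
    show "0 < (z - y) * (z - (y + d))"
    proof (cases "y < y0")
      case True
      then have "d < y0 - y" using gap y y0 by auto
      then show ?thesis using y0 dpos by (simp add: mult_pos_pos)
    next
      case False
      then have "y0 < y" using y by auto
      then have "d < y - y0" using gap y y0 by auto
      then have "y0 + d - y < 0" "y0 - y < 0" using \<open>y0 < y\<close> by auto
      then show ?thesis using y0 by (simp add: mult_neg_neg)
    qed
  qed
  then show ?thesis unfolding eq using dpos by simp
qed

end

lemma fin_exists:
  assumes n1: "1 \<le> n" and Yf: "finite Y" and cY: "card Y = n" and Yab: "Y \<subseteq> {a<..<b}"
    and mc: "m_convex (2*n-1) {a..b} f" and Tf: "finite T" and Tab: "T \<subseteq> {a..b}"
  shows "\<exists>p. degree p \<le> 2*n-1 \<and> (\<forall>y\<in>Y. poly p y = f y) \<and> (\<forall>t\<in>T. poly p t \<le> f t)"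
proof -
  have Yb: "\<forall>y\<in>Y. y < b" using Yab by auto
  obtain d where d: "0 < d" and dg: "\<forall>y\<in>Y. \<forall>t\<in>insert b (T \<union> Y). y < t \<longrightarrow> d < t - y"
    using delta_exists[OF Yf Tf Yb] by blast
  interpret pairing Y d using Yf d dg by unfold_locales auto
  define N where "N = Y \<union> Z"
  have Nf: "finite N" unfolding N_def using Yf Z_fin by simp
  have cN: "card N = 2 * n" unfolding N_def using card_Un_disjoint[OF Yf Z_fin Z_disj] Z_card cY by simp
  have Zab: "Z \<subseteq> {a..b}"
  proof
    fix z assume "z \<in> Z"
    then obtain y where y: "y \<in> Y" "z = y + d" unfolding Z_def by auto
    have "d < b - y" using dg y Yb by auto
    then show "z \<in> {a..b}" using y Yab d by auto
  qed
  have Nab: "N \<subseteq> {a..b}" unfolding N_def using Zab Yab by auto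
  define p where "p = lagr N f"
  have "degree p \<le> 2*n - 1" unfolding p_def using degree_lagr[OF Nf, of f] cN by simp
  moreover have "\<forall>y\<in>Y. poly p y = f y" unfolding p_def N_def using Nf lagr_node N_def by blast
  moreover have "\<forall>t\<in>T. poly p t \<le> f t"
  proof
    fix t assume t: "t \<in> T"
    show "poly p t \<le> f t"
    proof (cases "t \<in> N")
      case True
      have "t \<notin> Z"
      proof
        assume "t \<in> Z"
        then obtain y where y: "y \<in> Y" "t = y + d" unfolding Z_def by auto
        then show False using dg t d by force
      qed
      then have "t \<in> Y" using True N_def by auto
      then show ?thesis unfolding p_def using lagr_node[OF Nf] True by simp
    next
      case False
      have err: "f t - poly p t = ddS (insert t N) f * (\<Prod>v\<in>N. t - v)"
        unfolding p_def by (rule lagr_err[OF Nf False])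
      have "ddS (insert t N) f \<ge> 0"
        by (rule m_convex_ddS[OF mc]) (use Nf Nab t Tab False cN n1 in auto)
      moreover have "(\<Prod>v\<in>N. t - v) \<ge> 0"
        unfolding N_def pair_prod
      proof (rule prod_nonneg)
        fix y assume y: "y \<in> Y"
        have "t \<noteq> y" using False y N_def by auto
        show "0 \<le> (t - y) * (t - (y + d))"
        proof (cases "y < t")
          case True
          then have "d < t - y" using dg y t by auto
          then show ?thesis using d by simp
        next
          case False
          then have "t < y" using \<open>t \<noteq> y\<close> by auto
          then show ?thesis using d by (simp add: mult_nonneg_nonneg mult_nonpos_nonpos)
        qed
      qed
      ultimately have "f t - poly p t \<ge> 0" using err by simp
      then show ?thesis by simp
    qed
  qed
  ultimately show ?thesis by blast
qed



lemma prod_neg_sign: assumes "finite A" "\<forall>v\<in>A. a < (v::real)"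
  shows "(\<Prod>v\<in>A. a - v) = (-1) ^ card A * (\<Prod>v\<in>A. v - a)"
proof -
  have "(\<Prod>v\<in>A. a - v) = (\<Prod>v\<in>A. (-1) * (v - a))" by (rule prod.cong) auto
  also have "\<dots> = (\<Prod>v\<in>A. (-1::real)) * (\<Prod>v\<in>A. v - a)" by (rule prod.distrib)
  also have "\<dots> = (-1) ^ card A * (\<Prod>v\<in>A. v - a)" by simp
  finally show ?thesis .
qed

lemma lagr_cong: "(\<And>u. u \<in> N \<Longrightarrow> g u = h u) \<Longrightarrow> lagr N g = lagr N h"
  unfolding lagr_def by (rule sum.cong) auto

lemma compact_K: "compact (PiE UNIV (K :: real \<Rightarrow> real set)) " if "\<And>i. compact (K i)"
proof -
  have "compactin (product_topology (\<lambda>i. euclidean) UNIV) (PiE UNIV K)"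
    using that by (simp add: compactin_PiE)
  then show ?thesis by (simp add: euclidean_product_topology)
qed

lemma main_Y:
  assumes n1: "1 \<le> n" and Yf: "finite Y" and cY: "card Y = n" and Yab: "Y \<subseteq> {a<..<b}"
    and mc: "m_convex (2*n-1) {a..b} f" and ab: "a < b"
  shows "\<exists>p. degree p \<le> 2*n-1 \<and> (\<forall>y\<in>Y. poly p y = f y) \<and> (\<forall>t\<in>{a..b}. poly p t \<le> f t)"
proof -
  have Yb: "\<forall>y\<in>Y. y < b" using Yab by auto
  obtain d where d: "0 < d" and dg: "\<forall>y\<in>Y. \<forall>t\<in>insert b ({} \<union> Y). y < t \<longrightarrow> d < t - y"
    using delta_exists[OF Yf _ Yb, of "{}"] by blast
  interpret pairing Y d using Yf d dg by unfold_locales auto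
  define N where "N = Y \<union> Z"
  have Nf: "finite N" unfolding N_def using Yf Z_fin by simp
  have cN: "card N = 2 * n" unfolding N_def using card_Un_disjoint[OF Yf Z_fin Z_disj] Z_card cY by simp
  have Zab: "Z \<subseteq> {a<..<b}"
  proof
    fix z assume "z \<in> Z"
    then obtain y where y: "y \<in> Y" "z = y + d" unfolding Z_def by auto
    have "d < b - y" using dg y Yb by auto
    then show "z \<in> {a<..<b}" using y Yab d by auto
  qed
  define L where "L u t = (\<Prod>v\<in>N-{u}. t - v) / (\<Prod>v\<in>N-{u}. u - v)" for u t
  define gv where "gv v u = (if u \<in> Y then f u else v u)" for v :: "real \<Rightarrow> real" and u
  define E where "E v t = (\<Sum>u\<in>Y. f u * L u t) + (\<Sum>z\<in>Z. v z * L z t)" for v :: "real \<Rightarrow> real" and t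
  have polyE: "poly (lagr N (gv v)) t = E v t" for v t
  proof -
    have "poly (lagr N (gv v)) t = (\<Sum>u\<in>N. gv v u * L u t)" unfolding poly_lagr L_def by simp
    also have "\<dots> = (\<Sum>u\<in>Y. gv v u * L u t) + (\<Sum>u\<in>Z. gv v u * L u t)"
      unfolding N_def using Yf Z_fin Z_disj by (simp add: sum.union_disjoint)
    also have "\<dots> = E v t" unfolding E_def gv_def using Z_disj
      by (intro arg_cong2[where f="(+)"] sum.cong) auto
    finally show ?thesis .
  qed
  have Lneg: "L z a < 0" if z: "z \<in> Z" for z
  proof -
    have Na: "\<forall>v\<in>N-{z}. a < v" using Yab Zab unfolding N_def by auto
    have cc: "card (N - {z}) = 2 * n - 1" using cN z Nf unfolding N_def by simp
    have "(\<Prod>v\<in>N-{z}. a - v) = (-1) ^ (2*n-1) * (\<Prod>v\<in>N-{z}. v - a)"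
      using prod_neg_sign[OF _ Na] Nf cc by simp
    moreover have "(-1::real) ^ (2*n-1) = -1"
    proof -
      have "2*n-1 = Suc (2*(n-1))" using n1 by simp
      then show ?thesis by (simp add: power_mult)
    qed
    moreover have "0 < (\<Prod>v\<in>N-{z}. v - a)" using Na by (intro prod_pos) auto
    ultimately have num: "(\<Prod>v\<in>N-{z}. a - v) < 0" by simp
    have den: "0 < (\<Prod>v\<in>N-{z}. z - v)" using pair_pos[OF z] unfolding N_def .
    show ?thesis unfolding L_def using num den by (simp add: divide_neg_pos)
  qed
  define lo where "lo z = (f a - (\<Sum>u\<in>Y. f u * L u a) - (\<Sum>z'\<in>Z-{z}. f z' * L z' a)) / L z a" for z
  define K where "K = PiE UNIV (\<lambda>z. if z \<in> Z then {lo z .. f z} else {0::real})"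
  define C where "C t = {v. E v t \<le> f t}" for t
  have cK: "compact K" unfolding K_def by (rule compact_K) auto
  have cont: "continuous_on UNIV (\<lambda>v. E v t)" for t
  proof -
    have c1: "continuous_on UNIV (\<lambda>v::real\<Rightarrow>real. v z * L z t)" for z
      by (intro continuous_on_mult continuous_on_const) simp
    show ?thesis unfolding E_def
      by (intro continuous_on_add continuous_on_const continuous_on_sum c1)
  qed
  have clC: "closed (C t)" for t
    unfolding C_def by (rule closed_Collect_le[OF cont continuous_on_const])
  have "K \<inter> \<Inter>(C ` {a..b}) \<noteq> {}"
  proof (rule compact_imp_fip[OF cK])
    show "\<And>T. T \<in> C ` {a..b} \<Longrightarrow> closed T" using clC by blast
  next
    fix F' assume fF: "finite F'" and sF: "F' \<subseteq> C ` {a..b}"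
    obtain T' where T': "T' \<subseteq> {a..b}" "finite T'" "F' = C ` T'"
      using finite_subset_image[OF fF sF] by blast
    define T where "T = T' \<union> Z \<union> {a}"
    have Tf: "finite T" unfolding T_def using T' Z_fin by simp
    have Tab: "T \<subseteq> {a..b}" unfolding T_def using T'(1) Zab ab by auto
    obtain q where q: "degree q \<le> 2*n-1" "\<forall>y\<in>Y. poly q y = f y" "\<forall>t\<in>T. poly q t \<le> f t"
      using fin_exists[OF n1 Yf cY Yab mc Tf Tab] by blast
    define v where "v z = (if z \<in> Z then poly q z else 0)" for z
    have "lagr N (gv v) = lagr N (poly q)"
      by (rule lagr_cong) (use q(2) in \<open>auto simp: gv_def v_def N_def\<close>)
    also have "\<dots> = q" using lagr_unique[OF Nf] q(1) cN n1 by simp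
    finally have Pq: "E v t = poly q t" for t using polyE by metis
    have vC: "v \<in> C t" if "t \<in> T" for t unfolding C_def using Pq q(3) that by simp
    have "v \<in> K" unfolding K_def
    proof (simp add: PiE_iff, intro allI conjI impI)
      fix z assume z: "z \<in> Z"
      have vle: "v z' \<le> f z'" if "z' \<in> Z" for z'
      proof -
        have "E v z' \<le> f z'" using vC[of z'] that unfolding C_def T_def by simp
        then have "poly q z' \<le> f z'" by (simp only: Pq)
        then show ?thesis using that by (simp add: v_def)
      qed
      show "v z \<le> f z" using vle z .
      have Ea: "E v a \<le> f a" using vC[of a] unfolding C_def T_def by simp
      have split: "(\<Sum>z'\<in>Z. v z' * L z' a) = v z * L z a + (\<Sum>z'\<in>Z-{z}. v z' * L z' a)"
        using z Z_fin by (simp add: sum.remove)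
      have mono: "(\<Sum>z'\<in>Z-{z}. f z' * L z' a) \<le> (\<Sum>z'\<in>Z-{z}. v z' * L z' a)"
      proof (rule sum_mono)
        fix z' assume z': "z' \<in> Z - {z}"
        have "v z' \<le> f z'" using vle z' by simp
        then show "f z' * L z' a \<le> v z' * L z' a" using Lneg[of z'] z'
          by (simp add: mult_right_mono_neg)
      qed
      have "v z * L z a \<le> f a - (\<Sum>u\<in>Y. f u * L u a) - (\<Sum>z'\<in>Z-{z}. f z' * L z' a)"
        using Ea mono unfolding E_def split by linarith
      then show "lo z \<le> v z" unfolding lo_def using Lneg[OF z] by (simp add: neg_divide_le_eq)
    qed (simp add: v_def)
    moreover have "v \<in> \<Inter>F'" using T' vC unfolding T_def by auto
    ultimately show "K \<inter> \<Inter>F' \<noteq> {}" by blast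
  qed
  then obtain v where v: "\<forall>t\<in>{a..b}. v \<in> C t" by blast
  define p where "p = lagr N (gv v)"
  have "degree p \<le> 2*n-1" unfolding p_def using degree_lagr[OF Nf] cN by simp
  moreover have "\<forall>y\<in>Y. poly p y = f y" unfolding p_def
    using lagr_node[OF Nf] N_def gv_def by auto
  moreover have "\<forall>t\<in>{a..b}. poly p t \<le> f t" unfolding p_def polyE using v C_def by auto
  ultimately show ?thesis by blast
qed


theorem corollary2:
  fixes n :: nat and a b :: real and f :: "real \<Rightarrow> real" and x :: "nat \<Rightarrow> real"
  assumes "n \<ge> 1"
    and "a < b"
    and "m_convex (2 * n - 1) {a..b} f"
    and "\<forall>i\<in>{1..n}. x i \<in> {a<..<b}"
  shows "\<exists>p :: real poly. degree p \<le> 2 * n - 1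
           \<and> (\<forall>i\<in>{1..n}. poly p (x i) = f (x i))
           \<and> (\<forall>t\<in>{a..b}. poly p t \<le> f t)"
proof -
  define X0 where "X0 = x ` {1..n}"
  have fX: "finite X0" unfolding X0_def by simp
  have X0ab: "X0 \<subseteq> {a<..<b}" unfolding X0_def using assms(4) by auto
  have cX: "card X0 \<le> n" unfolding X0_def using card_image_le[of "{1..n}" x] by simp
  have "infinite ({a<..<b} - X0)" using assms(2) fX by (simp add: Diff_infinite_finite)
  then obtain B where B: "finite B" "card B = n - card X0" "B \<subseteq> {a<..<b} - X0"
    using infinite_arbitrarily_large by blast
  define Y where "Y = X0 \<union> B"
  have Yf: "finite Y" unfolding Y_def using fX B by simp
  have cY: "card Y = n" unfolding Y_def using card_Un_disjoint[OF fX B(1)] B cX by auto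
  have Yab: "Y \<subseteq> {a<..<b}" unfolding Y_def using X0ab B by auto
  obtain p where p: "degree p \<le> 2*n-1" "\<forall>y\<in>Y. poly p y = f y" "\<forall>t\<in>{a..b}. poly p t \<le> f t"
    using main_Y[OF assms(1) Yf cY Yab assms(3) assms(2)] by blast
  have "\<forall>i\<in>{1..n}. poly p (x i) = f (x i)" using p(2) unfolding Y_def X0_def by auto
  then show ?thesis using p by blast
qed

end
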